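(* Let $T:[a,b]\times[c,d]\to\mathbb{R}$ be the function constructed from a generating function $\phi$ as described in the context. If $\phi$ is of bounded variation in the sense of Arzelà on $[a_0,a_1]\times[c,d]$, then $\dim_H(G(T))=2$.
   Context: Let $a<b$, $c<d$. Set $a_0=a$ and $a_n=a+(b-a)(\tfrac12+\tfrac14+\dots+\tfrac1{2^n})$ for $n\in\mathbb{N}$, so $a_n\uparrow b$. Let $\phi:[a_0,a_1]\times[c,d]\to\mathbb{R}$ be continuous with $\phi(a_0,y)=\phi(a_1,y)$ for all $y\in[c,d]$ (the generating function). For $n\ge1$ let $\psi_n:[a_{n-1},a_n]\to[a_0,a_1]$ be the increasing affine bijection $\psi_n(x)=\frac{2^n[(a_1-a_0)x+a_0a_n-a_1a_{n-1}]}{b-a}$. Let $F_1=\phi$ on $[a_0,a_1]\times[c,d]$ and for $n\ge2$, $F_n(x,y)=\frac1n\phi(\psi_n(x),y)+\frac{n-1}{n}\phi(a_0,y)$ for $(x,y)\in[a_{n-1},a_n]\times[c,d]$. Define $T_n(x,y)=F_k(x,y)$ for $(x,y)\in[a_{k-1},a_k]\times[c,d]$, $k=1,\dots,n$, and $T_n(x,y)=F_n(a_n,y)$ for $(x,y)\in[a_n,b]\times[c,d]$; and $T(x,y)=\lim_{n\to\infty}T_n(x,y)$. Bounded variation in the sense of Arzelà on $[a_0,a_1]\times[c,d]$: there is $K$ such that for all $m$ and all $a_0=x_0\le\dots\le x_m=a_1$, $c=y_0\le\dots\le y_m=d$, $\sum_{i=0}^{m-1}|\phi(x_{i+1},y_{i+1})-\phi(x_i,y_i)|\le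 K$. $G(T)=\{(x,y,T(x,y))\}\subset\mathbb{R}^3$; $\dim_H$ is Hausdorff dimension. *)

theory Defs
  imports "HOL-Analysis.Analysis"
begin

definition hausdorff_measure :: "real \<Rightarrow> 'a::metric_space set \<Rightarrow> ennreal" where
  "hausdorff_measure s E =
     (SUP \<delta>\<in>{0<..}. INF U\<in>{U :: nat \<Rightarrow> 'a set.
         (\<forall>i. bounded (U i) \<and> diameter (U i) \<le> \<delta>) \<and> E \<subseteq> (\<Union>i. U i)}.
        (\<Sum>i. ennreal (diameter (U i) powr s)))"

definition hausdorff_dim :: "'a::metric_space set \<Rightarrow> real" where
  "hausdorff_dim E = Inf {s. s > 0 \<and> hausdorff_measure s E = 0}"

definition seq_a :: "real \<Rightarrow> real \<Rightarrow> nat \<Rightarrow> real" where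
  "seq_a a b n = a + (b - a) * (\<Sum>k=1..n. 1 / 2 ^ k)"

definition psi :: "real \<Rightarrow> real \<Rightarrow> nat \<Rightarrow> real \<Rightarrow> real" where
  "psi a b n x = 2 ^ n * ((seq_a a b 1 - seq_a a b 0) * x + seq_a a b 0 * seq_a a b n
                   - seq_a a b 1 * seq_a a b (n - 1)) / (b - a)"

definition Fn :: "real \<Rightarrow> real \<Rightarrow> (real \<Rightarrow> real \<Rightarrow> real) \<Rightarrow> nat \<Rightarrow> real \<Rightarrow> real \<Rightarrow> real" where
  "Fn a b \<phi> n x y = (if n = 1 then \<phi> x y
      else (1 / real n) * \<phi> (psi a b n x) y + (real n - 1) / real n * \<phi> (seq_a a b 0) y)"

text \<open>T_n(x,y) = F_k(x,y) on [a_{k-1},a_k] (k = 1..n), and F_n(a_n,y) on [a_n,b].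
  On the common endpoints a_k the adjacent pieces agree; we pick the least k.\<close>
definition Tn :: "real \<Rightarrow> real \<Rightarrow> (real \<Rightarrow> real \<Rightarrow> real) \<Rightarrow> nat \<Rightarrow> real \<Rightarrow> real \<Rightarrow> real" where
  "Tn a b \<phi> n x y = (if x < seq_a a b n
      then Fn a b \<phi> (LEAST k. 1 \<le> k \<and> x \<le> seq_a a b k) x y
      else Fn a b \<phi> n (seq_a a b n) y)"

definition Tlim :: "real \<Rightarrow> real \<Rightarrow> (real \<Rightarrow> real \<Rightarrow> real) \<Rightarrow> real \<Rightarrow> real \<Rightarrow> real" where
  "Tlim a b \<phi> x y = lim (\<lambda>n. Tn a b \<phi> n x y)"

definition graph_T :: "real \<Rightarrow> real \<Rightarrow> real \<Rightarrow> real \<Rightarrow> (real \<Rightarrow> real \<Rightarrow> real) \<Rightarrow> (real \<times> real \<times> real) set" where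
  "graph_T a b c d \<phi> = {(x, y, Tlim a b \<phi> x y) | x y. x \<in> {a..b} \<and> y \<in> {c..d}}"

definition arzela_bv :: "(real \<Rightarrow> real \<Rightarrow> real) \<Rightarrow> real \<Rightarrow> real \<Rightarrow> real \<Rightarrow> real \<Rightarrow> bool" where
  "arzela_bv \<phi> x0 x1 c d \<longleftrightarrow> (\<exists>K. \<forall>m (xs :: nat \<Rightarrow> real) (ys :: nat \<Rightarrow> real).
      xs 0 = x0 \<and> xs m = x1 \<and> ys 0 = c \<and> ys m = d \<and>
      (\<forall>i<m. xs i \<le> xs (Suc i) \<and> ys i \<le> ys (Suc i)) \<longrightarrow>
      (\<Sum>i<m. \<bar>\<phi> (xs (Suc i)) (ys (Suc i)) - \<phi> (xs i) (ys i)\<bar>) \<le> K)"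

end

theory Submission
  imports Defs
begin

definition hnull :: "real \<Rightarrow> 'a::metric_space set \<Rightarrow> bool" where
  "hnull s E \<longleftrightarrow> (\<forall>\<delta>>0. \<forall>e>0. \<exists>U::nat \<Rightarrow> 'a set. (\<forall>i. bounded (U i) \<and> diameter (U i) \<le> \<delta>)
      \<and> E \<subseteq> (\<Union>i. U i) \<and> (\<Sum>i. ennreal (diameter (U i) powr s)) \<le> ennreal e)"

lemma hnull_H: assumes "hnull s E" shows "hausdorff_measure s E = 0"
proof -
  have "(INF U\<in>{U :: nat \<Rightarrow> 'a set.
         (\<forall>i. bounded (U i) \<and> diameter (U i) \<le> \<delta>) \<and> E \<subseteq> (\<Union>i. U i)}.
        (\<Sum>i. ennreal (diameter (U i) powr s))) \<le> 0" if "\<delta> > 0" for \<delta>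
  proof (rule ennreal_le_epsilon)
    fix e :: real assume "0 < e"
    with assms \<open>\<delta>>0\<close> obtain U where U: "\<forall>i. bounded (U i) \<and> diameter (U i) \<le> \<delta>" "E \<subseteq> (\<Union>i. U i)"
      "(\<Sum>i. ennreal (diameter (U i) powr s)) \<le> ennreal e"
      unfolding hnull_def by metis
    show "(INF U\<in>{U :: nat \<Rightarrow> 'a set.
         (\<forall>i. bounded (U i) \<and> diameter (U i) \<le> \<delta>) \<and> E \<subseteq> (\<Union>i. U i)}.
        (\<Sum>i. ennreal (diameter (U i) powr s))) \<le> 0 + ennreal e"
      apply (rule INF_lower2[of U])
      using U apply blast
      using U(3) by simp
  qed
  then show ?thesis unfolding hausdorff_measure_def
    by (intro antisym SUP_least) simp_all
qed
lemma hnull_subset: assumes "hnull s E" "F \<subseteq> E" shows "hnull s F"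
  unfolding hnull_def
proof (intro allI impI)
  fix \<delta> e :: real assume "\<delta> > 0" "e > 0"
  with assms(1) obtain U where U: "\<forall>i. bounded (U i) \<and> diameter (U i) \<le> \<delta>" "E \<subseteq> (\<Union>i. U i)"
      "(\<Sum>i. ennreal (diameter (U i) powr s)) \<le> ennreal e"
      unfolding hnull_def by metis
  have "F \<subseteq> (\<Union>i. U i)" using U(2) assms(2) by (rule order_trans[rotated])
  with U show "\<exists>U::nat \<Rightarrow> 'a set. (\<forall>i. bounded (U i) \<and> diameter (U i) \<le> \<delta>)
      \<and> F \<subseteq> (\<Union>i. U i) \<and> (\<Sum>i. ennreal (diameter (U i) powr s)) \<le> ennreal e"
    apply (intro exI[of _ U]) by (intro conjI; assumption)
qed

lemma hnull_Union:
  fixes E :: "nat \<Rightarrow> 'a::metric_space set"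
  assumes "\<And>n. hnull s (E n)" shows "hnull s (\<Union>n. E n)"
  unfolding hnull_def
proof (intro allI impI)
  fix \<delta> e :: real assume "\<delta> > 0" "e > 0"
  have "\<forall>n. \<exists>U::nat \<Rightarrow> 'a set. (\<forall>i. bounded (U i) \<and> diameter (U i) \<le> \<delta>)
      \<and> E n \<subseteq> (\<Union>i. U i) \<and> (\<Sum>i. ennreal (diameter (U i) powr s)) \<le> ennreal (e / 2 ^ Suc n)"
  proof
    fix n
    have "e / 2 ^ Suc n > 0" using \<open>e>0\<close> by simp
    with assms[of n] \<open>\<delta>>0\<close> show "\<exists>U::nat \<Rightarrow> 'a set. (\<forall>i. bounded (U i) \<and> diameter (U i) \<le> \<delta>)
      \<and> E n \<subseteq> (\<Union>i. U i) \<and> (\<Sum>i. ennreal (diameter (U i) powr s)) \<le> ennreal (e / 2 ^ Suc n)"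
      unfolding hnull_def by metis
  qed
  then obtain U where U: "\<And>n. (\<forall>i. bounded (U n i) \<and> diameter (U n i) \<le> \<delta>)"
    "\<And>n. E n \<subseteq> (\<Union>i. U n i)" "\<And>n. (\<Sum>i. ennreal (diameter (U n i) powr s)) \<le> ennreal (e / 2 ^ Suc n)"
    by metis
  have hs: "(\<lambda>n. e / 2 ^ Suc n) sums e"
  proof -
    have "(\<lambda>n. e * (1/2::real) ^ Suc n) sums (e * 1)"
      by (rule sums_mult[OF power_half_series])
    then show ?thesis by (simp add: power_one_over)
  qed
  define V where "V i = U (fst (prod_decode i)) (snd (prod_decode i))" for i
  have "(\<Sum>i. ennreal (diameter (V i) powr s)) = (\<Sum>i. (\<lambda>(n,m). ennreal (diameter (U n m) powr s)) (prod_decode i))"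
    unfolding V_def by (simp only: case_prod_beta)
  also have "\<dots> = (\<Sum>n. (\<Sum>m. ennreal (diameter (U n m) powr s)))"
    by (rule suminf_ennreal_2dimen) (simp only: case_prod_conv)
  also have "\<dots> \<le> (\<Sum>n. ennreal (e / 2 ^ Suc n))"
    by (rule suminf_le[OF U(3) summableI summableI])
  also have "\<dots> = ennreal (\<Sum>n. e / 2 ^ Suc n)"
    using \<open>e>0\<close> by (intro suminf_ennreal2 sums_summable[OF hs]) simp
  also have "ennreal (\<Sum>n. e / 2 ^ Suc n) = ennreal e"
    using hs by (simp add: sums_iff)
  finally have S: "(\<Sum>i. ennreal (diameter (V i) powr s)) \<le> ennreal e" .
  have "(\<Union>n. E n) \<subseteq> (\<Union>i. V i)"
  proof
    fix x assume "x \<in> (\<Union>n. E n)"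
    then obtain n m where "x \<in> U n m" using U(2) by blast
    then have "x \<in> V (prod_encode (n,m))" by (simp add: V_def)
    then show "x \<in> (\<Union>i. V i)" by blast
  qed
  moreover have "\<forall>i. bounded (V i) \<and> diameter (V i) \<le> \<delta>" using U(1) by (simp add: V_def)
  ultimately show "\<exists>U::nat \<Rightarrow> 'a set. (\<forall>i. bounded (U i) \<and> diameter (U i) \<le> \<delta>)
      \<and> (\<Union>n. E n) \<subseteq> (\<Union>i. U i) \<and> (\<Sum>i. ennreal (diameter (U i) powr s)) \<le> ennreal e"
    using S apply (intro exI[of _ V]) by (intro conjI; assumption)
qed

lemma hnull_finite:
  fixes E :: "'a::metric_space set"
  assumes "\<And>\<delta> e. \<delta> > 0 \<Longrightarrow> e > 0 \<Longrightarrow> \<exists>F. finite F \<and> E \<subseteq> \<Union>F \<and> (\<forall>A\<in>F. bounded A \<and> diameter A \<le> \<delta>)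
      \<and> (\<Sum>A\<in>F. diameter A powr s) \<le> e"
  shows "hnull s E"
  unfolding hnull_def
proof (intro allI impI)
  fix \<delta> e :: real assume "\<delta> > 0" "e > 0"
  then obtain F where F: "finite F" "E \<subseteq> \<Union>F" "\<forall>A\<in>F. bounded A \<and> diameter A \<le> \<delta>"
      "(\<Sum>A\<in>F. diameter A powr s) \<le> e" using assms[OF \<open>\<delta>>0\<close> \<open>e>0\<close>] by metis
  obtain xs where xs: "set xs = F" "distinct xs" using finite_distinct_list[OF F(1)] by blast
  define U where "U i = (if i < length xs then xs ! i else {})" for i
  have "(\<Sum>i. ennreal (diameter (U i) powr s)) = (\<Sum>i<length xs. ennreal (diameter (U i) powr s))"
    by (rule suminf_finite) (auto simp: U_def)
  also have "\<dots> = ennreal (\<Sum>i<length xs. diameter (xs ! i) powr s)"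
    by (subst sum_ennreal) (auto simp: U_def)
  also have "(\<Sum>i<length xs. diameter (xs ! i) powr s) = (\<Sum>A\<in>F. diameter A powr s)"
  proof -
    have "(\<Sum>i<length xs. diameter (xs ! i) powr s) = sum_list (map (\<lambda>A. diameter A powr s) xs)"
      by (simp add: sum_list_sum_nth atLeast0LessThan)
    also have "\<dots> = (\<Sum>A\<in>F. diameter A powr s)" using xs by (metis sum.distinct_set_conv_list)
    finally show ?thesis .
  qed
  finally have "(\<Sum>i. ennreal (diameter (U i) powr s)) \<le> ennreal e" using F(4) by (simp add: ennreal_leI)
  moreover have "E \<subseteq> (\<Union>i. U i)"
  proof
    fix x assume "x \<in> E"
    then obtain A where "A \<in> F" "x \<in> A" using F(2) by blast
    then obtain i where "i < length xs" "xs ! i = A" using xs by (metis in_set_conv_nth)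
    then show "x \<in> (\<Union>i. U i)" using \<open>x\<in>A\<close> by (auto simp: U_def)
  qed
  moreover have "\<forall>i. bounded (U i) \<and> diameter (U i) \<le> \<delta>"
    using F(3) xs \<open>\<delta>>0\<close> by (auto simp: U_def)
  ultimately show "\<exists>U::nat \<Rightarrow> 'a set. (\<forall>i. bounded (U i) \<and> diameter (U i) \<le> \<delta>)
      \<and> E \<subseteq> (\<Union>i. U i) \<and> (\<Sum>i. ennreal (diameter (U i) powr s)) \<le> ennreal e"
    apply (intro exI[of _ U]) by (intro conjI; assumption)
qed

definition bvf :: "(real \<times> real \<Rightarrow> real) \<Rightarrow> (real \<times> real) set \<Rightarrow> real \<Rightarrow> bool" where
  "bvf g R K \<longleftrightarrow> (\<forall>m (z::nat \<Rightarrow> real \<times> real). (\<forall>i\<le>m. z i \<in> R) \<and>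
      (\<forall>i<m. fst (z i) \<le> fst (z (Suc i)) \<and> snd (z i) \<le> snd (z (Suc i))) \<longrightarrow>
      (\<Sum>i<m. \<bar>g (z (Suc i)) - g (z i)\<bar>) \<le> K)"

lemma bvfD: "bvf g R K \<Longrightarrow> (\<And>i. i \<le> m \<Longrightarrow> z i \<in> R) \<Longrightarrow>
   (\<And>i. i < m \<Longrightarrow> fst (z i) \<le> fst (z (Suc i)) \<and> snd (z i) \<le> snd (z (Suc i))) \<Longrightarrow>
   (\<Sum>i<m. \<bar>g (z (Suc i)) - g (z i)\<bar>) \<le> K"
  unfolding bvf_def by blast

lemma bvf_nonneg: "bvf g R K \<Longrightarrow> R \<noteq> {} \<Longrightarrow> 0 \<le> K"
proof -
  assume "bvf g R K" "R \<noteq> {}"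
  then obtain r where "r \<in> R" by blast
  have "(\<Sum>i<0. \<bar>g ((\<lambda>_. r) (Suc i)) - g ((\<lambda>_. r) i)\<bar>) \<le> K"
    by (rule bvfD[OF \<open>bvf g R K\<close>]) (use \<open>r\<in>R\<close> in auto)
  then show "0 \<le> K" by simp
qed

lemma arzela_bvf:
  assumes "p \<le> q" "c \<le> d" "arzela_bv \<phi> p q c d"
  shows "\<exists>K. bvf (\<lambda>(x,y). \<phi> x y) ({p..q} \<times> {c..d}) K"
proof -
  obtain K where K0: "\<forall>m (xs :: nat \<Rightarrow> real) (ys :: nat \<Rightarrow> real).
      xs 0 = p \<and> xs m = q \<and> ys 0 = c \<and> ys m = d \<and>
      (\<forall>i<m. xs i \<le> xs (Suc i) \<and> ys i \<le> ys (Suc i)) \<longrightarrow>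
      (\<Sum>i<m. \<bar>\<phi> (xs (Suc i)) (ys (Suc i)) - \<phi> (xs i) (ys i)\<bar>) \<le> K"
    using assms(3) unfolding arzela_bv_def by (elim exE) (rule that)
  note K = K0[rule_format]
  have "bvf (\<lambda>(x,y). \<phi> x y) ({p..q} \<times> {c..d}) K"
    unfolding bvf_def
  proof (intro allI impI)
    fix m and z :: "nat \<Rightarrow> real \<times> real"
    assume A: "(\<forall>i\<le>m. z i \<in> {p..q} \<times> {c..d}) \<and>
      (\<forall>i<m. fst (z i) \<le> fst (z (Suc i)) \<and> snd (z i) \<le> snd (z (Suc i)))"
    define w where "w i = (if i = 0 then (p,c) else if i \<le> Suc m then z (i - 1) else (q,d))" for i
    define f where "f i = \<bar>\<phi> (fst (w (Suc i))) (snd (w (Suc i))) - \<phi> (fst (w i)) (snd (w i))\<bar>" for i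
    have Az: "\<And>i. i \<le> m \<Longrightarrow> p \<le> fst (z i) \<and> fst (z i) \<le> q \<and> c \<le> snd (z i) \<and> snd (z i) \<le> d"
      using A by (simp add: mem_Times_iff)
    have Am: "\<And>i. i < m \<Longrightarrow> fst (z i) \<le> fst (z (Suc i)) \<and> snd (z i) \<le> snd (z (Suc i))"
      using A by blast
    have w0: "w 0 = (p,c)" by (simp add: w_def)
    have wS: "\<And>k. k \<le> m \<Longrightarrow> w (Suc k) = z k" by (simp add: w_def)
    have wSS: "w (Suc (Suc m)) = (q,d)" by (simp add: w_def)
    have mono: "\<forall>i<Suc (Suc m). fst (w i) \<le> fst (w (Suc i)) \<and> snd (w i) \<le> snd (w (Suc i))"
    proof (intro allI impI)
      fix i assume "i < Suc (Suc m)"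
      have "i = 0 \<or> (\<exists>k. i = Suc k \<and> k < m) \<or> i = Suc m"
      proof (cases i)
        case (Suc k) with \<open>i<Suc(Suc m)\<close> have "k < m \<or> k = m" by linarith
        then show ?thesis using Suc by blast
      qed simp
      then consider "i = 0" | k where "i = Suc k" "k < m" | "i = Suc m"
        by blast
      then show "fst (w i) \<le> fst (w (Suc i)) \<and> snd (w i) \<le> snd (w (Suc i))"
      proof cases
        case 1 then show ?thesis using Az[of 0] w0 wS[of 0] by simp
      next
        case 2
        then show ?thesis using Am[of k] wS[of k] wS[of "Suc k"] by simp
      next
        case 3 then show ?thesis using Az[of m] wS[of m] wSS by simp
      qed
    qed
    have "(\<Sum>i<Suc (Suc m). f i) \<le> K"
      unfolding f_def by (rule K) (use mono w0 wSS in simp)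
    moreover have "(\<Sum>i<m. \<bar>(\<lambda>(x,y). \<phi> x y) (z (Suc i)) - (\<lambda>(x,y). \<phi> x y) (z i)\<bar>) = (\<Sum>i<m. f (Suc i))"
      by (intro sum.cong refl) (simp add: f_def wS case_prod_beta)
    moreover have "(\<Sum>i<m. f (Suc i)) \<le> (\<Sum>i<Suc (Suc m). f i)"
    proof -
      have "(\<Sum>i<m. f (Suc i)) = (\<Sum>i\<in>Suc ` {..<m}. f i)" by (simp add: sum.reindex)
      also have "\<dots> \<le> (\<Sum>i<Suc (Suc m). f i)"
        by (intro sum_mono2) (auto simp: f_def)
      finally show ?thesis .
    qed
    ultimately show "(\<Sum>i<m. \<bar>(\<lambda>(x,y). \<phi> x y) (z (Suc i)) - (\<lambda>(x,y). \<phi> x y) (z i)\<bar>) \<le> K"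
      by linarith
  qed
  then show ?thesis by blast
qed

lemma choose_N:
  fixes B D \<delta> e s :: real
  assumes "0 \<le> B" "0 < D" "0 < \<delta>" "0 < e" "2 < s"
  shows "\<exists>N::nat. 0 < N \<and> D / N \<le> \<delta> \<and> B * real N ^ 2 * (D / N) powr s \<le> e"
proof -
  define X where "X = B * D powr s / e"
  have X0: "0 \<le> X" using assms by (simp add: X_def)
  obtain N :: nat where N: "max (D / \<delta>) ((X + 1) powr (1 / (s - 2))) < N"
    using reals_Archimedean2 by blast
  have Npos: "0 < real N" using N assms by (smt (verit) divide_pos_pos)
  have "D / \<delta> < N" using N by simp
  then have D1: "D / N \<le> \<delta>" using assms Npos by (simp add: field_simps)
  have "(X + 1) powr (1 / (s - 2)) < N" using N by simp
  then have "((X + 1) powr (1 / (s - 2))) powr (s - 2) < real N powr (s - 2)"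
    by (intro powr_less_mono2) (use assms X0 in auto)
  also have "((X + 1) powr (1 / (s - 2))) powr (s - 2) = X + 1"
    using assms X0 by (simp add: powr_powr)
  finally have XN: "X + 1 < real N powr (s - 2)" .
  have "B * real N ^ 2 * (D / N) powr s = B * D powr s * (real N powr 2 / real N powr s)"
    using Npos assms by (simp add: powr_divide powr_realpow)
  also have "real N powr 2 / real N powr s = 1 / real N powr (s - 2)"
    using Npos by (simp add: powr_diff)
  also have "B * D powr s * (1 / real N powr (s - 2)) = X * e / real N powr (s - 2)"
    using assms by (simp add: X_def)
  also have "\<dots> \<le> e"
  proof -
    have "X * e \<le> e * real N powr (s - 2)" using XN assms X0
      by (smt (verit) mult.commute mult_right_mono)
    moreover have "0 < real N powr (s - 2)" using Npos by simp
    ultimately show ?thesis by (simp add: divide_le_eq)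
  qed
  finally show ?thesis using Npos D1 by (intro exI[of _ N]) simp
qed

lemma cell_index:
  fixes p q x :: real and N :: nat
  assumes "p \<le> x" "x \<le> q" "0 < N"
  shows "\<exists>i<N. p + real i * ((q - p) / N) \<le> x \<and> x \<le> p + real (Suc i) * ((q - p) / N)"
proof -
  define P where "P i \<longleftrightarrow> x \<le> p + real (Suc i) * ((q - p) / N)" for i
  have PN: "P (N - 1)" using assms by (simp add: P_def Suc_diff_1)
  define i where "i = (LEAST i. P i)"
  have Pi: "P i" unfolding i_def by (rule LeastI[of P "N - 1", OF PN])
  have iN: "i \<le> N - 1" unfolding i_def by (rule Least_le[of P "N - 1", OF PN])
  have lo: "p + real i * ((q - p) / N) \<le> x"
  proof (cases i)
    case 0 then show ?thesis using assms by simp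
  next
    case (Suc k)
    then have "k < i" by simp
    then have "\<not> P k" unfolding i_def by (rule not_less_Least)
    then show ?thesis using Suc by (simp add: P_def)
  qed
  show ?thesis using Pi lo iN assms(3) by (intro exI[of _ i]) (simp add: P_def)
qed

lemma slot_index:
  fixes r RR :: real and N :: nat
  assumes "0 \<le> r" "r \<le> RR" "0 < N"
  shows "\<exists>k < nat \<lceil>RR * N\<rceil> + 1. real k / N \<le> r \<and> r \<le> (real k + 1) / N"
proof -
  define k where "k = nat \<lfloor>r * N\<rfloor>"
  have rN: "0 \<le> r * N" using assms by simp
  have k1: "real k \<le> r * N" using rN by (simp add: k_def)
  have k2: "r * N < real k + 1" using rN by (simp add: k_def)
  have "r * N \<le> RR * N" using assms by (simp add: mult_right_mono)
  then have "\<lfloor>r * N\<rfloor> \<le> \<lceil>RR * N\<rceil>" by (meson floor_le_ceiling le_ceiling_iff order_trans ceiling_mono)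
  then have "k < nat \<lceil>RR * N\<rceil> + 1" unfolding k_def by linarith
  moreover have "real k / N \<le> r" using k1 assms by (simp add: divide_le_eq mult.commute)
  moreover have "r \<le> (real k + 1) / N" using k2 assms by (simp add: le_divide_eq mult.commute)
  ultimately show ?thesis by blast
qed

lemma box_diam:
  fixes x0 y0 z0 w h t :: real
  assumes "0 \<le> w" "0 \<le> h" "0 \<le> t"
  shows "bounded ({x0..x0+w} \<times> {y0..y0+h} \<times> {z0..z0+t})"
    and "diameter ({x0..x0+w} \<times> {y0..y0+h} \<times> {z0..z0+t}) \<le> sqrt (w^2 + h^2 + t^2)"
proof -
  show "bounded ({x0..x0+w} \<times> {y0..y0+h} \<times> {z0..z0+t})"
    by (intro bounded_Times) auto
  show "diameter ({x0..x0+w} \<times> {y0..y0+h} \<times> {z0..z0+t}) \<le> sqrt (w^2 + h^2 + t^2)"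
  proof (rule diameter_le)
    show "{x0..x0+w} \<times> {y0..y0+h} \<times> {z0..z0+t} \<noteq> {} \<or> 0 \<le> sqrt (w^2 + h^2 + t^2)" by simp
  next
    fix u v assume u: "u \<in> {x0..x0+w} \<times> {y0..y0+h} \<times> {z0..z0+t}" and v: "v \<in> {x0..x0+w} \<times> {y0..y0+h} \<times> {z0..z0+t}"
    obtain u1 u2 u3 where uu: "u = (u1,u2,u3)" by (cases u) auto
    obtain v1 v2 v3 where vv: "v = (v1,v2,v3)" by (cases v) auto
    have a: "(u1 - v1)^2 \<le> w^2"
    proof -
      have "\<bar>u1 - v1\<bar> \<le> w" using u v uu vv by auto
      then have "\<bar>u1 - v1\<bar>^2 \<le> w^2" by (intro power_mono) auto
      then show ?thesis by simp
    qed
    have b: "(u2 - v2)^2 \<le> h^2"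
    proof -
      have "\<bar>u2 - v2\<bar> \<le> h" using u v uu vv by auto
      then have "\<bar>u2 - v2\<bar>^2 \<le> h^2" by (intro power_mono) auto
      then show ?thesis by simp
    qed
    have c: "(u3 - v3)^2 \<le> t^2"
    proof -
      have "\<bar>u3 - v3\<bar> \<le> t" using u v uu vv by auto
      then have "\<bar>u3 - v3\<bar>^2 \<le> t^2" by (intro power_mono) auto
      then show ?thesis by simp
    qed
    have "norm (u - v) = sqrt ((u1 - v1)^2 + ((u2 - v2)^2 + (u3 - v3)^2))"
      using uu vv by (simp add: norm_Pair)
    also have "\<dots> \<le> sqrt (w^2 + h^2 + t^2)" using a b c by simp
    finally show "norm (u - v) \<le> sqrt (w^2 + h^2 + t^2)" .
  qed
qed

lemma diag_chain:
  fixes P Q :: "nat \<Rightarrow> real \<times> real" and lo hi :: nat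
  assumes bv: "bvf g R K" and le: "lo \<le> hi"
    and PR: "\<And>i. lo \<le> i \<Longrightarrow> i \<le> hi \<Longrightarrow> P i \<in> R"
    and QR: "\<And>i. lo \<le> i \<Longrightarrow> i < hi \<Longrightarrow> Q i \<in> R"
    and PQ: "\<And>i. lo \<le> i \<Longrightarrow> i < hi \<Longrightarrow> fst (P i) \<le> fst (Q i) \<and> snd (P i) \<le> snd (Q i)"
    and QP: "\<And>i. lo \<le> i \<Longrightarrow> i < hi \<Longrightarrow> fst (Q i) \<le> fst (P (Suc i)) \<and> snd (Q i) \<le> snd (P (Suc i))"
  shows "(\<Sum>i\<in>{lo..<hi}. \<bar>g (Q i) - g (P i)\<bar>) \<le> K"
proof -
  define n where "n = hi - lo"
  define z where "z k = (if even k then P (lo + k div 2) else Q (lo + k div 2))" for k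
  define f where "f k = \<bar>g (z (Suc k)) - g (z k)\<bar>" for k
  have zR: "z k \<in> R" if "k \<le> 2 * n" for k
  proof (cases "even k")
    case True
    have "lo + k div 2 \<le> hi" using that le unfolding n_def by presburger
    then show ?thesis using True by (auto simp: z_def intro!: PR)
  next
    case False
    then have "k < 2 * n" using that by (metis le_neq_implies_less even_mult_iff even_numeral)
    then have "k div 2 < n" by linarith
    then show ?thesis using False by (auto simp: z_def n_def intro!: QR)
  qed
  have zmono: "fst (z k) \<le> fst (z (Suc k)) \<and> snd (z k) \<le> snd (z (Suc k))" if "k < 2 * n" for k
  proof (cases "even k")
    case True
    then have "Suc k div 2 = k div 2" by (simp add: even_iff_mod_2_eq_zero)
    moreover have "k div 2 < n" using that by linarith
    ultimately show ?thesis using True PQ[of "lo + k div 2"] by (simp add: z_def n_def)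
  next
    case False
    then have "Suc k div 2 = Suc (k div 2)" by (simp add: odd_iff_mod_2_eq_one)
    moreover have "k div 2 < n" using that by linarith
    ultimately show ?thesis using False QP[of "lo + k div 2"] by (simp add: z_def n_def)
  qed
  have "(\<Sum>k<2 * n. f k) \<le> K"
    unfolding f_def by (rule bvfD[OF bv]) (simp_all add: zR zmono)
  moreover have "(\<Sum>i\<in>{lo..<hi}. \<bar>g (Q i) - g (P i)\<bar>) = (\<Sum>l<n. f (2 * l))"
  proof -
    have "(\<Sum>i\<in>{lo..<hi}. \<bar>g (Q i) - g (P i)\<bar>) = (\<Sum>l<n. \<bar>g (Q (lo + l)) - g (P (lo + l))\<bar>)"
    proof -
      have "{lo..<hi} = {0 + lo..<n + lo}" using le by (simp add: n_def)
      then have "(\<Sum>i\<in>{lo..<hi}. \<bar>g (Q i) - g (P i)\<bar>) = (\<Sum>i\<in>{0..<n}. \<bar>g (Q (i + lo)) - g (P (i + lo))\<bar>)"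
        by (simp only: sum.shift_bounds_nat_ivl)
      then show ?thesis by (simp add: atLeast0LessThan add.commute)
    qed
    also have "\<dots> = (\<Sum>l<n. f (2 * l))" by (simp add: f_def z_def)
    finally show ?thesis .
  qed
  moreover have "(\<Sum>l<n. f (2 * l)) \<le> (\<Sum>k<2 * n. f k)"
  proof -
    have "(\<Sum>l<n. f (2 * l)) = (\<Sum>k\<in>(\<lambda>l. 2 * l) ` {..<n}. f k)"
      by (simp add: sum.reindex inj_on_def)
    also have "\<dots> \<le> (\<Sum>k<2 * n. f k)"
      by (intro sum_mono2) (auto simp: f_def)
    finally show ?thesis .
  qed
  ultimately show ?thesis by linarith
qed

lemma diag_sum:
  fixes M :: "nat \<Rightarrow> nat \<Rightarrow> real" and N :: nat and K :: real
  assumes M0: "\<And>i j. 0 \<le> M i j"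
    and diag: "\<And>r. r < 2 * N \<Longrightarrow> (\<Sum>i<N. (if N \<le> i + r \<and> i + r < 2 * N then M i (i + r - N) else 0)) \<le> K"
  shows "(\<Sum>i<N. \<Sum>j<N. M i j) \<le> 2 * N * K"
proof -
  define M2 where "M2 i r = (if N \<le> i + r \<and> i + r < 2 * N then M i (i + r - N) else 0)" for i r
  have "(\<Sum>j<N. M i j) \<le> (\<Sum>r<2 * N. M2 i r)" if "i < N" for i
  proof -
    have inj: "inj_on (\<lambda>j. j + N - i) {..<N}" using that by (auto simp: inj_on_def)
    have "(\<Sum>j<N. M i j) = (\<Sum>j<N. M2 i (j + N - i))"
      using that by (intro sum.cong refl) (auto simp: M2_def)
    also have "\<dots> = (\<Sum>r\<in>(\<lambda>j. j + N - i) ` {..<N}. M2 i r)"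
      by (simp add: sum.reindex[OF inj])
    also have "\<dots> \<le> (\<Sum>r<2 * N. M2 i r)"
      using that by (intro sum_mono2) (auto simp: M2_def M0)
    finally show ?thesis .
  qed
  then have "(\<Sum>i<N. \<Sum>j<N. M i j) \<le> (\<Sum>i<N. \<Sum>r<2 * N. M2 i r)"
    by (intro sum_mono) auto
  also have "\<dots> = (\<Sum>r<2 * N. \<Sum>i<N. M2 i r)" by (rule sum.swap)
  also have "\<dots> \<le> (\<Sum>r<2 * N. K)"
    by (intro sum_mono) (use diag in \<open>simp add: M2_def\<close>)
  also have "\<dots> = 2 * N * K" by simp
  finally show ?thesis .
qed

lemma grid_null:
  fixes g :: "real \<times> real \<Rightarrow> real" and p q c d K s :: real
  assumes pq: "p \<le> q" and cd: "c \<le> d" and cont: "continuous_on ({p..q} \<times> {c..d}) g"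
    and bv: "bvf g ({p..q} \<times> {c..d}) K" and s: "2 < s"
  shows "hnull s {(x, y, g (x, y)) | x y. x \<in> {p..q} \<and> y \<in> {c..d}}"
proof (rule hnull_finite)
  fix \<delta> e :: real assume \<delta>: "0 < \<delta>" and e: "0 < e"
  define R where "R = {p..q} \<times> {c..d}"
  have "R \<noteq> {}" using pq cd by (simp add: R_def)
  then have K0: "0 \<le> K" using bvf_nonneg bv unfolding R_def by blast
  define D where "D = sqrt ((q-p)^2 + (d-c)^2 + 1)"
  have D0: "0 < D" unfolding D_def by (intro real_sqrt_gt_zero add_nonneg_pos) auto
  obtain N :: nat where N: "0 < N" "D / N \<le> \<delta>" "(4*K+2) * real N ^ 2 * (D / N) powr s \<le> e"
    using choose_N[of "4*K+2" D \<delta> e s] K0 D0 \<delta> e s by auto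
  have Nr: "0 < real N" using N by simp
  define w where "w = (q - p) / N"
  define h where "h = (d - c) / N"
  define X where "X i = p + real i * w" for i
  define Y where "Y j = c + real j * h" for j
  have w0: "0 \<le> w" using pq Nr by (simp add: w_def)
  have h0: "0 \<le> h" using cd Nr by (simp add: h_def)
  have XS: "X (Suc i) = X i + w" for i by (simp add: X_def algebra_simps)
  have YS: "Y (Suc j) = Y j + h" for j by (simp add: Y_def algebra_simps)
  have XN: "p \<le> X i \<and> X i \<le> q" if "i \<le> N" for i
  proof -
    have "real i * w \<le> real N * w" using that w0 by (intro mult_right_mono) auto
    also have "real N * w = q - p" using Nr by (simp add: w_def)
    finally show ?thesis using w0 by (simp add: X_def)
  qed
  have YN: "c \<le> Y j \<and> Y j \<le> d" if "j \<le> N" for j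
  proof -
    have "real j * h \<le> real N * h" using that h0 by (intro mult_right_mono) auto
    also have "real N * h = d - c" using Nr by (simp add: h_def)
    finally show ?thesis using h0 by (simp add: Y_def)
  qed
  define cell where "cell i j = {X i..X (Suc i)} \<times> {Y j..Y (Suc j)}" for i j
  have cellR: "cell i j \<subseteq> R" if "i < N" "j < N" for i j
    using XN[of i] XN[of "Suc i"] YN[of j] YN[of "Suc j"] that
    by (auto simp: cell_def R_def)
  have mx_ex: "\<exists>m. m \<in> cell i j \<and> (\<forall>z\<in>cell i j. \<bar>g z - g (X i, Y j)\<bar> \<le> \<bar>g m - g (X i, Y j)\<bar>)"
    if "i < N" "j < N" for i j
  proof -
    have "compact (cell i j)" unfolding cell_def by (intro compact_Times compact_Icc)
    moreover have "cell i j \<noteq> {}" using XS YS w0 h0 by (simp add: cell_def)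
    moreover have "continuous_on (cell i j) (\<lambda>z. \<bar>g z - g (X i, Y j)\<bar>)"
      using cellR[OF that] cont unfolding R_def
      by (intro continuous_on_rabs continuous_on_diff continuous_on_const) (rule continuous_on_subset)
    ultimately obtain m where "m \<in> cell i j" "\<forall>z\<in>cell i j. \<bar>g z - g (X i, Y j)\<bar> \<le> \<bar>g m - g (X i, Y j)\<bar>"
      using continuous_attains_sup[of "cell i j" "\<lambda>z. \<bar>g z - g (X i, Y j)\<bar>"] by blast
    then show ?thesis by blast
  qed
  define mx where "mx i j = (SOME m. m \<in> cell i j \<and> (\<forall>z\<in>cell i j. \<bar>g z - g (X i, Y j)\<bar> \<le> \<bar>g m - g (X i, Y j)\<bar>))" for i j
  have mx: "mx i j \<in> cell i j \<and> (\<forall>z\<in>cell i j. \<bar>g z - g (X i, Y j)\<bar> \<le> \<bar>g (mx i j) - g (X i, Y j)\<bar>)"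
    if "i < N" "j < N" for i j
    unfolding mx_def by (rule someI_ex[OF mx_ex[OF that]])
  define M where "M i j = \<bar>g (mx i j) - g (X i, Y j)\<bar>" for i j
  have M0: "0 \<le> M i j" for i j by (simp add: M_def)
  define L where "L i j = nat \<lceil>2 * M i j * N\<rceil> + 1" for i j
  define box where "box i j k = {X i..X i + w} \<times> {Y j..Y j + h} \<times>
      {g (X i, Y j) - M i j + real k / N .. g (X i, Y j) - M i j + real k / N + 1 / N}" for i j k
  define I where "I = (SIGMA i:{..<N}. SIGMA j:{..<N}. {..<L i j})"
  define F where "F = (\<lambda>(i,j,k). box i j k) ` I"
  have finI: "finite I" unfolding I_def by (intro finite_SigmaI) auto
  have Dw: "sqrt (w^2 + h^2 + (1/N)^2) = D / N"
  proof -
    have "w^2 + h^2 + (1/N)^2 = ((q-p)^2 + (d-c)^2 + 1) / (real N)^2"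
      by (simp add: w_def h_def power_divide add_divide_distrib)
    then show ?thesis using Nr by (simp add: D_def real_sqrt_divide)
  qed
  have Fbd: "bounded A \<and> diameter A \<le> D / N" if "A \<in> F" for A
  proof -
    obtain i j k where A: "A = box i j k" using \<open>A \<in> F\<close> unfolding F_def by auto
    have "0 \<le> 1 / real N" by simp
    note bd = box_diam[OF w0 h0 this, of "X i" "Y j" "g (X i, Y j) - M i j + real k / N"]
    show ?thesis using bd Dw unfolding A box_def by simp
  qed
  have cover: "{(x, y, g (x, y)) | x y. x \<in> {p..q} \<and> y \<in> {c..d}} \<subseteq> \<Union>F"
  proof
    fix t assume "t \<in> {(x, y, g (x, y)) | x y. x \<in> {p..q} \<and> y \<in> {c..d}}"
    then obtain x y where t: "t = (x, y, g (x, y))" and x: "p \<le> x" "x \<le> q" and y: "c \<le> y" "y \<le> d" by auto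
    obtain i where i: "i < N" "X i \<le> x" "x \<le> X (Suc i)"
      using cell_index[OF x N(1)] unfolding X_def w_def by blast
    obtain j where j: "j < N" "Y j \<le> y" "y \<le> Y (Suc j)"
      using cell_index[OF y N(1)] unfolding Y_def h_def by blast
    have "(x, y) \<in> cell i j" using i j by (simp add: cell_def)
    then have bnd: "\<bar>g (x, y) - g (X i, Y j)\<bar> \<le> M i j" using mx[OF i(1) j(1)] by (simp add: M_def)
    define v where "v = g (X i, Y j)"
    have r0: "0 \<le> g (x, y) - v + M i j" and r1: "g (x, y) - v + M i j \<le> 2 * M i j"
      using bnd by (auto simp: v_def)
    obtain k where k: "k < nat \<lceil>2 * M i j * N\<rceil> + 1" "real k / N \<le> g (x, y) - v + M i j"
      "g (x, y) - v + M i j \<le> (real k + 1) / N"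
      using slot_index[OF r0 r1 N(1)] by blast
    have kL: "k < L i j" using k(1) by (simp add: L_def)
    have "(real k + 1) / N = real k / N + 1 / N" by (simp add: add_divide_distrib)
    then have "t \<in> box i j k" using t i j k XS YS
      by (simp add: box_def v_def)
    moreover have "(i, j, k) \<in> I" using i j kL by (simp add: I_def)
    ultimately show "t \<in> \<Union>F" unfolding F_def by force
  qed
  have diag: "(\<Sum>i<N. (if N \<le> i + r \<and> i + r < 2 * N then M i (i + r - N) else 0)) \<le> K"
    if r: "r < 2 * N" for r
  proof -
    define lo where "lo = N - r"
    define hi where "hi = min N (2 * N - r)"
    have set: "{i\<in>{..<N}. N \<le> i + r \<and> i + r < 2 * N} = {lo..<hi}"
      by (auto simp: lo_def hi_def)
    have "(\<Sum>i<N. (if N \<le> i + r \<and> i + r < 2 * N then M i (i + r - N) else 0))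
        = (\<Sum>i\<in>{lo..<hi}. M i (i + r - N))"
      using sum.inter_filter[of "{..<N}" "\<lambda>i. M i (i + r - N)" "\<lambda>i. N \<le> i + r \<and> i + r < 2 * N"]
      unfolding set by simp
    also have "\<dots> = (\<Sum>i\<in>{lo..<hi}. \<bar>g ((\<lambda>i. mx i (i + r - N)) i) - g ((\<lambda>i. (X i, Y (i + r - N))) i)\<bar>)"
      by (simp add: M_def)
    also have "\<dots> \<le> K"
    proof (rule diag_chain[where R=R])
      show "bvf g R K" using bv by (simp add: R_def)
      show "lo \<le> hi" using r by (simp add: lo_def hi_def)
    next
      fix i assume "lo \<le> i" "i \<le> hi"
      then have "i \<le> N" "i + r - N \<le> N" using r by (auto simp: lo_def hi_def)
      then show "(X i, Y (i + r - N)) \<in> R" using XN YN by (simp add: R_def)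
    next
      fix i assume "lo \<le> i" "i < hi"
      then have ij: "i < N" "i + r - N < N" "N \<le> i + r" using r by (auto simp: lo_def hi_def)
      have mc: "mx i (i + r - N) \<in> cell i (i + r - N)" using mx[OF ij(1) ij(2)] by blast
      then show "mx i (i + r - N) \<in> R" using cellR[OF ij(1) ij(2)] by blast
      show "fst (X i, Y (i + r - N)) \<le> fst (mx i (i + r - N)) \<and> snd (X i, Y (i + r - N)) \<le> snd (mx i (i + r - N))"
        using mc by (auto simp: cell_def mem_Times_iff)
      have e: "Suc i + r - N = Suc (i + r - N)" using ij(3) by simp
      show "fst (mx i (i + r - N)) \<le> fst (X (Suc i), Y (Suc i + r - N)) \<and> snd (mx i (i + r - N)) \<le> snd (X (Suc i), Y (Suc i + r - N))"
        using mc unfolding e by (auto simp: cell_def mem_Times_iff)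
    qed
    finally show ?thesis .
  qed
  have sumM: "(\<Sum>i<N. \<Sum>j<N. M i j) \<le> 2 * N * K"
    by (rule diag_sum[OF M0 diag])
  have cardI: "real (card I) \<le> (4*K+2) * real N ^ 2"
  proof -
    have "card I = (\<Sum>i<N. \<Sum>j<N. L i j)" by (simp add: I_def)
    then have "real (card I) = (\<Sum>i<N. \<Sum>j<N. real (L i j))" by simp
    also have "\<dots> \<le> (\<Sum>i<N. \<Sum>j<N. 2 * M i j * N + 2)"
    proof (intro sum_mono)
      fix i j
      have y0: "0 \<le> 2 * M i j * N" using M0[of i j] by simp
      have "real (nat \<lceil>2 * M i j * N\<rceil>) = real_of_int \<lceil>2 * M i j * N\<rceil>"
        using y0 by simp
      also have "\<dots> \<le> 2 * M i j * N + 1" by linarith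
      finally show "real (L i j) \<le> 2 * M i j * N + 2" by (simp add: L_def)
    qed
    also have "(\<Sum>i<N. \<Sum>j<N. 2 * M i j * N + 2) = 2 * N * (\<Sum>i<N. \<Sum>j<N. M i j) + 2 * real N ^ 2"
    proof -
      have "(\<Sum>i<N. \<Sum>j<N. 2 * M i j * N + 2) = (\<Sum>i<N. \<Sum>j<N. (2 * N) * M i j) + (\<Sum>i<N. \<Sum>j<N. 2)"
        by (simp add: sum.distrib mult.commute mult.left_commute)
      also have "(\<Sum>i<N. \<Sum>j<N. (2 * N) * M i j) = 2 * N * (\<Sum>i<N. \<Sum>j<N. M i j)"
        by (simp add: sum_distrib_left)
      also have "(\<Sum>i<N. \<Sum>j<N. (2::real)) = 2 * real N ^ 2" by (simp add: power2_eq_square)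
      finally show ?thesis .
    qed
    also have "\<dots> \<le> 2 * N * (2 * N * K) + 2 * real N ^ 2"
      using sumM Nr by (intro add_right_mono mult_left_mono) auto
    also have "\<dots> = (4*K+2) * real N ^ 2" by (simp add: algebra_simps power2_eq_square)
    finally show ?thesis .
  qed
  have "(\<Sum>A\<in>F. diameter A powr s) \<le> real (card F) * (D / N) powr s"
    by (rule sum_bounded_above) (use Fbd s in \<open>auto intro!: powr_mono2 diameter_ge_0\<close>)
  also have "\<dots> \<le> real (card I) * (D / N) powr s"
    unfolding F_def by (intro mult_right_mono) (auto intro: card_image_le finI)
  also have "\<dots> \<le> (4*K+2) * real N ^ 2 * (D / N) powr s"
    by (intro mult_right_mono cardI) auto
  also have "\<dots> \<le> e" by (rule N(3))
  finally have S: "(\<Sum>A\<in>F. diameter A powr s) \<le> e" .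
  have "\<forall>A\<in>F. bounded A \<and> diameter A \<le> \<delta>" using Fbd N(2) by force
  moreover have "finite F" unfolding F_def using finI by simp
  ultimately show "\<exists>F. finite F \<and> {(x, y, g (x, y)) | x y. x \<in> {p..q} \<and> y \<in> {c..d}} \<subseteq> \<Union>F \<and>
      (\<forall>A\<in>F. bounded A \<and> diameter A \<le> \<delta>) \<and> (\<Sum>A\<in>F. diameter A powr s) \<le> e"
    using cover S by blast
qed

lemma lower_bound:
  fixes G :: "(real \<times> real \<times> real) set" and a b c d s :: real
  assumes ab: "a < b" and cd: "c < d" and s: "0 < s" "s \<le> 2"
    and proj: "\<And>x y. x \<in> {a..b} \<Longrightarrow> y \<in> {c..d} \<Longrightarrow> \<exists>z. (x, y, z) \<in> G"
  shows "hausdorff_measure s G \<noteq> 0"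
proof -
  define A where "A = (b - a) * (d - c)"
  have A0: "0 < A" using ab cd by (simp add: A_def)
  have key: "ennreal (A / 4) \<le> (\<Sum>i. ennreal (diameter (U i) powr s))"
    if U: "\<forall>i. bounded (U i) \<and> diameter (U i) \<le> 1" "G \<subseteq> (\<Union>i. U i)" for U :: "nat \<Rightarrow> (real \<times> real \<times> real) set"
  proof -
    define u where "u i = (SOME v. v \<in> U i)" for i
    define r where "r i = diameter (U i)" for i
    define B where "B i = (if U i = {} then {} else
        cbox (fst (u i) - r i, fst (snd (u i)) - r i) (fst (u i) + r i, fst (snd (u i)) + r i))" for i
    have r0: "0 \<le> r i" for i using U(1) by (simp add: r_def diameter_ge_0)
    have rect: "cbox (a, c) (b, d) \<subseteq> (\<Union>i. B i)"
    proof
      fix t :: "real \<times> real" assume "t \<in> cbox (a, c) (b, d)"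
      then obtain x y where t: "t = (x, y)" "x \<in> {a..b}" "y \<in> {c..d}"
        by (cases t) (auto simp: cbox_Pair_iff)
      obtain z where "(x, y, z) \<in> G" using proj t by blast
      then obtain i where xi: "(x, y, z) \<in> U i" using U(2) by blast
      then have ne: "U i \<noteq> {}" by blast
      then have ui: "u i \<in> U i" unfolding u_def by (metis some_in_eq)
      have dd: "dist (x, y, z) (u i) \<le> r i"
        unfolding r_def using U(1) xi ui by (intro diameter_bounded_bound) auto
      have d1: "dist x (fst (u i)) \<le> r i"
        using dist_fst_le[of "(x, y, z)" "u i"] dd by simp
      have d2: "dist y (fst (snd (u i))) \<le> r i"
        using dist_fst_le[of "(y, z)" "snd (u i)"] dist_snd_le[of "(x, y, z)" "u i"] dd by simp
      have "t \<in> B i" using ne d1 d2 unfolding B_def t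
        by (auto simp: cbox_Pair_iff dist_real_def abs_le_iff)
      then show "t \<in> (\<Union>i. B i)" by blast
    qed
    have Bm: "range B \<subseteq> sets lborel" by (auto simp: B_def)
    have EB: "emeasure lborel (B i) \<le> ennreal 4 * ennreal (diameter (U i) powr s)" for i
    proof (cases "U i = {}")
      case True then show ?thesis by (simp add: B_def)
    next
      case False
      have "emeasure lborel (B i) = ennreal ((2 * r i) * (2 * r i))"
        using False r0[of i] by (simp add: B_def emeasure_lborel_cbox_eq Basis_prod_def algebra_simps)
      also have "(2 * r i) * (2 * r i) \<le> 4 * (diameter (U i) powr s)"
      proof (cases "r i = 0")
        case True then show ?thesis by simp
      next
        case False
        then have rp: "0 < r i" using r0[of i] by linarith
        have "r i * r i = r i powr 2" using rp by (simp add: powr_realpow power2_eq_square)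
        also have "\<dots> \<le> r i powr s"
          using r0[of i] U(1) s by (intro powr_mono') (auto simp: r_def)
        finally show ?thesis by (simp add: r_def)
      qed
      then have "ennreal ((2 * r i) * (2 * r i)) \<le> ennreal (4 * (diameter (U i) powr s))"
        by (rule ennreal_leI)
      also have "\<dots> = ennreal 4 * ennreal (diameter (U i) powr s)"
        by (simp add: ennreal_mult)
      finally show ?thesis .
    qed
    have "ennreal A = emeasure lborel (cbox (a, c) (b, d))"
      using ab cd by (simp add: A_def emeasure_lborel_cbox_eq Basis_prod_def)
    also have "\<dots> \<le> emeasure lborel (\<Union>i. B i)"
      using rect Bm by (intro emeasure_mono) auto
    also have "\<dots> \<le> (\<Sum>i. emeasure lborel (B i))"
      using Bm by (rule emeasure_subadditive_countably)
    also have "\<dots> \<le> (\<Sum>i. ennreal 4 * ennreal (diameter (U i) powr s))"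
      by (intro suminf_le EB summableI)
    also have "\<dots> = ennreal 4 * (\<Sum>i. ennreal (diameter (U i) powr s))"
      by (rule ennreal_suminf_cmult)
    finally have L: "ennreal A \<le> ennreal 4 * (\<Sum>i. ennreal (diameter (U i) powr s))" .
    have "ennreal 4 * ennreal (A/4) = ennreal (4 * (A/4))" using A0 by (intro ennreal_mult[symmetric]) auto
    also have "ennreal (4 * (A/4)) = ennreal A" by simp
    finally have "ennreal 4 * ennreal (A / 4) \<le> ennreal 4 * (\<Sum>i. ennreal (diameter (U i) powr s))"
      using L by simp
    then show ?thesis by (subst (asm) ennreal_mult_le_mult_iff) auto
  qed
  have "ennreal (A / 4) \<le> (INF U\<in>{U :: nat \<Rightarrow> (real \<times> real \<times> real) set.
         (\<forall>i. bounded (U i) \<and> diameter (U i) \<le> 1) \<and> G \<subseteq> (\<Union>i. U i)}.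
        (\<Sum>i. ennreal (diameter (U i) powr s)))"
    by (rule INF_greatest) (use key in blast)
  also have "\<dots> \<le> hausdorff_measure s G"
    unfolding hausdorff_measure_def by (rule SUP_upper2[of 1]) auto
  finally have "ennreal (A / 4) \<le> hausdorff_measure s G" .
  moreover have "0 < ennreal (A / 4)" using A0 by simp
  ultimately show ?thesis by auto
qed

lemma sum_half: "(\<Sum>k=1..n. 1 / 2 ^ k :: real) = 1 - 1 / 2 ^ n"
proof (induction n)
  case 0 then show ?case by simp
next
  case (Suc n)
  have "(\<Sum>k=1..Suc n. 1 / 2 ^ k :: real) = (\<Sum>k=1..n. 1 / 2 ^ k) + 1 / 2 ^ Suc n"
    by (simp add: sum.atLeast_Suc_atMost_Suc_shift sum.cl_ivl_Suc)
  also have "\<dots> = 1 - 1 / 2 ^ Suc n" using Suc by (simp add: field_simps)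
  finally show ?case .
qed

lemma seq_a_closed: "seq_a a b n = b - (b - a) / 2 ^ n"
  unfolding seq_a_def sum_half by (simp add: algebra_simps)

lemma seq_a_0 [simp]: "seq_a a b 0 = a"
  by (simp add: seq_a_def)

lemma seq_a_less: "a < b \<Longrightarrow> seq_a a b n < b"
  by (simp add: seq_a_closed)

lemma seq_a_mono: "a < b \<Longrightarrow> m \<le> n \<Longrightarrow> seq_a a b m \<le> seq_a a b n"
proof -
  assume "a < b" "m \<le> n"
  then have "(2::real) ^ m \<le> 2 ^ n" by (intro power_increasing) auto
  then have "(b - a) / 2 ^ n \<le> (b - a) / 2 ^ m" using \<open>a<b\<close>
    by (intro divide_left_mono) auto
  then show ?thesis by (simp add: seq_a_closed)
qed

lemma seq_a_ge: "a < b \<Longrightarrow> a \<le> seq_a a b n"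
  using seq_a_mono[of a b 0 n] by simp

lemma seq_a_eventually: "a < b \<Longrightarrow> x < b \<Longrightarrow> \<exists>n. x < seq_a a b n"
proof -
  assume ab: "a < b" and xb: "x < b"
  obtain n where n: "(1/2::real) ^ n < (b - x) / (b - a)"
    using real_arch_pow_inv[of "(b - x) / (b - a)" "1/2"] ab xb by auto
  then have "(b - a) / 2 ^ n < b - x" using ab by (simp add: power_one_over field_simps)
  then have "x < seq_a a b n" by (simp add: seq_a_closed)
  then show ?thesis by blast
qed

lemma psi_eq:
  assumes "a < b" "1 \<le> n"
  shows "psi a b n x = a + 2 ^ (n - 1) * (x - seq_a a b (n - 1))"
proof -
  obtain m where n: "n = Suc m" using assms by (cases n) auto
  show ?thesis unfolding psi_def n seq_a_closed using assms
    by (simp add: field_simps)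
qed

lemma psi_ends:
  assumes "a < b" "1 \<le> n"
  shows "psi a b n (seq_a a b (n - 1)) = a" "psi a b n (seq_a a b n) = seq_a a b 1"
proof -
  show "psi a b n (seq_a a b (n - 1)) = a" using psi_eq[OF assms] by simp
  obtain m where n: "n = Suc m" using assms by (cases n) auto
  have "psi a b n (seq_a a b n) = a + 2 ^ (n - 1) * (seq_a a b n - seq_a a b (n - 1))"
    by (rule psi_eq[OF assms])
  also have "\<dots> = seq_a a b 1"
    using assms unfolding n by (simp add: seq_a_closed field_simps)
  finally show "psi a b n (seq_a a b n) = seq_a a b 1" .
qed

lemma piece_ok:
  fixes \<phi> :: "real \<Rightarrow> real \<Rightarrow> real" and \<psi> :: "real \<Rightarrow> real"
  assumes cont: "continuous_on ({\<alpha>0..\<alpha>1} \<times> {c..d}) (\<lambda>(x, y). \<phi> x y)"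
    and bv: "bvf (\<lambda>(x, y). \<phi> x y) ({\<alpha>0..\<alpha>1} \<times> {c..d}) K"
    and al: "\<alpha>0 \<le> \<alpha>1"
    and psi_in: "\<And>x. x \<in> {p..q} \<Longrightarrow> \<psi> x \<in> {\<alpha>0..\<alpha>1}"
    and psi_mono: "\<And>x y. p \<le> x \<Longrightarrow> x \<le> y \<Longrightarrow> y \<le> q \<Longrightarrow> \<psi> x \<le> \<psi> y"
    and psi_cont: "continuous_on {p..q} \<psi>"
    and l1: "0 \<le> l1" and l2: "0 \<le> l2"
  shows "continuous_on ({p..q} \<times> {c..d}) (\<lambda>(x, y). l1 * \<phi> (\<psi> x) y + l2 * \<phi> \<alpha>0 y)"
    and "bvf (\<lambda>(x, y). l1 * \<phi> (\<psi> x) y + l2 * \<phi> \<alpha>0 y) ({p..q} \<times> {c..d}) ((l1 + l2) * K)"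
proof -
  define f where "f = (\<lambda>(x, y). \<phi> x y)"
  have c1: "continuous_on ({p..q} \<times> {c..d}) (\<lambda>z. f (\<psi> (fst z), snd z))"
  proof (rule continuous_on_compose2[OF cont[folded f_def]])
    show "continuous_on ({p..q} \<times> {c..d}) (\<lambda>z. (\<psi> (fst z), snd z))"
      by (intro continuous_intros continuous_on_compose2[OF psi_cont]) auto
    show "(\<lambda>z. (\<psi> (fst z), snd z)) ` ({p..q} \<times> {c..d}) \<subseteq> {\<alpha>0..\<alpha>1} \<times> {c..d}"
      using psi_in by auto
  qed
  have c2: "continuous_on ({p..q} \<times> {c..d}) (\<lambda>z. f (\<alpha>0, snd z))"
  proof (rule continuous_on_compose2[OF cont[folded f_def]])
    show "continuous_on ({p..q} \<times> {c..d}) (\<lambda>z. (\<alpha>0, snd z))"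
      by (intro continuous_intros)
    show "(\<lambda>z. (\<alpha>0, snd z)) ` ({p..q} \<times> {c..d}) \<subseteq> {\<alpha>0..\<alpha>1} \<times> {c..d}"
      using al by auto
  qed
  have eqf: "(\<lambda>(x, y). l1 * \<phi> (\<psi> x) y + l2 * \<phi> \<alpha>0 y) = (\<lambda>z. l1 * f (\<psi> (fst z), snd z) + l2 * f (\<alpha>0, snd z))"
    by (auto simp: f_def)
  show "continuous_on ({p..q} \<times> {c..d}) (\<lambda>(x, y). l1 * \<phi> (\<psi> x) y + l2 * \<phi> \<alpha>0 y)"
    unfolding eqf by (intro continuous_intros c1 c2)
  show "bvf (\<lambda>(x, y). l1 * \<phi> (\<psi> x) y + l2 * \<phi> \<alpha>0 y) ({p..q} \<times> {c..d}) ((l1 + l2) * K)"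
    unfolding eqf bvf_def
  proof (intro allI impI)
    fix m and z :: "nat \<Rightarrow> real \<times> real"
    assume A: "(\<forall>i\<le>m. z i \<in> {p..q} \<times> {c..d}) \<and>
      (\<forall>i<m. fst (z i) \<le> fst (z (Suc i)) \<and> snd (z i) \<le> snd (z (Suc i)))"
    have zin: "\<And>i. i \<le> m \<Longrightarrow> p \<le> fst (z i) \<and> fst (z i) \<le> q \<and> c \<le> snd (z i) \<and> snd (z i) \<le> d"
      using A by (simp add: mem_Times_iff)
    have zm: "\<And>i. i < m \<Longrightarrow> fst (z i) \<le> fst (z (Suc i)) \<and> snd (z i) \<le> snd (z (Suc i))"
      using A by blast
    define z1 where "z1 i = (\<psi> (fst (z i)), snd (z i))" for i
    define z2 where "z2 i = (\<alpha>0, snd (z i))" for i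
    have S1: "(\<Sum>i<m. \<bar>f (z1 (Suc i)) - f (z1 i)\<bar>) \<le> K"
    proof (rule bvfD[OF bv[folded f_def]])
      fix i assume "i \<le> m" then show "z1 i \<in> {\<alpha>0..\<alpha>1} \<times> {c..d}"
        using zin[of i] psi_in[of "fst (z i)"] by (simp add: z1_def)
    next
      fix i assume "i < m"
      then show "fst (z1 i) \<le> fst (z1 (Suc i)) \<and> snd (z1 i) \<le> snd (z1 (Suc i))"
        using zin[of i] zin[of "Suc i"] zm[of i] psi_mono[of "fst (z i)" "fst (z (Suc i))"]
        by (simp add: z1_def)
    qed
    have S2: "(\<Sum>i<m. \<bar>f (z2 (Suc i)) - f (z2 i)\<bar>) \<le> K"
    proof (rule bvfD[OF bv[folded f_def]])
      fix i assume "i \<le> m" then show "z2 i \<in> {\<alpha>0..\<alpha>1} \<times> {c..d}"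
        using zin[of i] al by (simp add: z2_def)
    next
      fix i assume "i < m"
      then show "fst (z2 i) \<le> fst (z2 (Suc i)) \<and> snd (z2 i) \<le> snd (z2 (Suc i))"
        using zm[of i] by (simp add: z2_def)
    qed
    have pt: "\<bar>(l1 * f (\<psi> (fst (z (Suc i))), snd (z (Suc i))) + l2 * f (\<alpha>0, snd (z (Suc i)))) -
               (l1 * f (\<psi> (fst (z i)), snd (z i)) + l2 * f (\<alpha>0, snd (z i)))\<bar>
          \<le> l1 * \<bar>f (z1 (Suc i)) - f (z1 i)\<bar> + l2 * \<bar>f (z2 (Suc i)) - f (z2 i)\<bar>" for i
    proof -
      have "\<bar>(l1 * f (z1 (Suc i)) + l2 * f (z2 (Suc i))) - (l1 * f (z1 i) + l2 * f (z2 i))\<bar>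
          = \<bar>l1 * (f (z1 (Suc i)) - f (z1 i)) + l2 * (f (z2 (Suc i)) - f (z2 i))\<bar>"
        by (simp add: algebra_simps)
      also have "\<dots> \<le> \<bar>l1 * (f (z1 (Suc i)) - f (z1 i))\<bar> + \<bar>l2 * (f (z2 (Suc i)) - f (z2 i))\<bar>"
        by (rule abs_triangle_ineq)
      also have "\<dots> = l1 * \<bar>f (z1 (Suc i)) - f (z1 i)\<bar> + l2 * \<bar>f (z2 (Suc i)) - f (z2 i)\<bar>"
        using l1 l2 by (simp add: abs_mult)
      finally show ?thesis by (simp add: z1_def z2_def)
    qed
    have "(\<Sum>i<m. \<bar>(l1 * f (\<psi> (fst (z (Suc i))), snd (z (Suc i))) + l2 * f (\<alpha>0, snd (z (Suc i)))) -
               (l1 * f (\<psi> (fst (z i)), snd (z i)) + l2 * f (\<alpha>0, snd (z i)))\<bar>)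
        \<le> (\<Sum>i<m. l1 * \<bar>f (z1 (Suc i)) - f (z1 i)\<bar> + l2 * \<bar>f (z2 (Suc i)) - f (z2 i)\<bar>)"
      by (intro sum_mono pt)
    also have "\<dots> = l1 * (\<Sum>i<m. \<bar>f (z1 (Suc i)) - f (z1 i)\<bar>) + l2 * (\<Sum>i<m. \<bar>f (z2 (Suc i)) - f (z2 i)\<bar>)"
      by (simp add: sum.distrib sum_distrib_left)
    also have "\<dots> \<le> l1 * K + l2 * K"
      using S1 S2 l1 l2 by (intro add_mono mult_left_mono) auto
    also have "\<dots> = (l1 + l2) * K" by (simp add: algebra_simps)
    finally show "(\<Sum>i<m. \<bar>(l1 * f (\<psi> (fst (z (Suc i))), snd (z (Suc i))) + l2 * f (\<alpha>0, snd (z (Suc i)))) -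
               (l1 * f (\<psi> (fst (z i)), snd (z i)) + l2 * f (\<alpha>0, snd (z i)))\<bar>) \<le> (l1 + l2) * K" .
  qed
qed

lemma Tlim_lt:
  assumes ab: "a < b" and x: "a \<le> x" "x < b"
  shows "\<exists>k\<ge>1. seq_a a b (k - 1) \<le> x \<and> x \<le> seq_a a b k \<and> Tlim a b \<phi> x y = Fn a b \<phi> k x y"
proof -
  obtain n where n: "x < seq_a a b n" using seq_a_eventually[OF ab x(2)] by blast
  define P where "P k \<longleftrightarrow> 1 \<le> k \<and> x \<le> seq_a a b k" for k
  have n1: "1 \<le> n" using n x by (cases n) auto
  have Pn: "P n" using n n1 by (simp add: P_def)
  define k where "k = (LEAST k. P k)"
  have Pk: "P k" unfolding k_def by (rule LeastI[of P n, OF Pn])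
  have lo: "seq_a a b (k - 1) \<le> x"
  proof (cases "k = 1")
    case True then show ?thesis using x by simp
  next
    case False
    then have "k - 1 < k" "1 \<le> k - 1" using Pk by (auto simp: P_def)
    then have "\<not> P (k - 1)" unfolding k_def using not_less_Least by blast
    then show ?thesis using \<open>1 \<le> k - 1\<close> by (simp add: P_def)
  qed
  have ev: "\<forall>\<^sub>F m in sequentially. Tn a b \<phi> m x y = Fn a b \<phi> k x y"
  proof (rule eventually_sequentiallyI[of n])
    fix m assume "n \<le> m"
    then have "x < seq_a a b m" using n seq_a_mono[OF ab, of n m] by linarith
    then show "Tn a b \<phi> m x y = Fn a b \<phi> k x y"
      unfolding Tn_def k_def P_def by simp
  qed
  have "Tlim a b \<phi> x y = Fn a b \<phi> k x y"
    unfolding Tlim_def by (rule limI) (rule tendsto_eventually[OF ev])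
  then show ?thesis using Pk lo by (auto simp: P_def)
qed

lemma Tlim_b:
  assumes ab: "a < b" and eq: "\<phi> (seq_a a b 0) y = \<phi> (seq_a a b 1) y"
  shows "Tlim a b \<phi> b y = \<phi> a y"
proof -
  have ev: "\<forall>\<^sub>F m in sequentially. Tn a b \<phi> m b y = \<phi> a y"
  proof (rule eventually_sequentiallyI[of 1])
    fix m :: nat assume m: "1 \<le> m"
    have "\<not> b < seq_a a b m" using seq_a_less[OF ab] by (simp add: not_less less_imp_le)
    then have "Tn a b \<phi> m b y = Fn a b \<phi> m (seq_a a b m) y" by (simp add: Tn_def)
    also have "\<dots> = \<phi> a y"
    proof (cases "m = 1")
      case True then show ?thesis using eq by (simp add: Fn_def)
    next
      case False
      have "Fn a b \<phi> m (seq_a a b m) y = 1 / real m * \<phi> (seq_a a b 1) y + (real m - 1) / real m * \<phi> a y"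
        using False psi_ends(2)[OF ab m] by (simp add: Fn_def)
      also have "\<dots> = \<phi> a y" using eq m by (simp add: field_simps)
      finally show ?thesis .
    qed
    finally show "Tn a b \<phi> m b y = \<phi> a y" .
  qed
  show ?thesis
    unfolding Tlim_def by (rule limI) (rule tendsto_eventually[OF ev])
qed

theorem mainTheorem11:
  fixes a b c d :: real and \<phi> :: "real \<Rightarrow> real \<Rightarrow> real"
  assumes "a < b" and "c < d"
    and "continuous_on ({seq_a a b 0..seq_a a b 1} \<times> {c..d}) (\<lambda>(x, y). \<phi> x y)"
    and "\<forall>y\<in>{c..d}. \<phi> (seq_a a b 0) y = \<phi> (seq_a a b 1) y"
    and "arzela_bv \<phi> (seq_a a b 0) (seq_a a b 1) c d"
  shows "hausdorff_dim (graph_T a b c d \<phi>) = 2"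
proof -
  note ab = assms(1) and cd = assms(2) and cont = assms(3) and per = assms(4)
  define G where "G = graph_T a b c d \<phi>"
  have al: "seq_a a b 0 \<le> seq_a a b 1" using seq_a_mono[OF ab, of 0 1] by simp
  obtain K where bv: "bvf (\<lambda>(x, y). \<phi> x y) ({seq_a a b 0..seq_a a b 1} \<times> {c..d}) K"
    using arzela_bvf[OF al _ assms(5)] cd by auto
  have K0: "0 \<le> K" using bvf_nonneg[OF bv] al cd by auto
  have up: "hausdorff_measure s G = 0" if s: "2 < s" for s
  proof -
    define g0 :: "real \<times> real \<Rightarrow> real" where "g0 = (\<lambda>(x, y). 0 * \<phi> ((\<lambda>_. seq_a a b 0) x) y + 1 * \<phi> (seq_a a b 0) y)"
    define gk :: "nat \<Rightarrow> real \<times> real \<Rightarrow> real" where "gk k = (\<lambda>(x, y). Fn a b \<phi> k x y)" for k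
    define E :: "nat \<Rightarrow> (real \<times> real \<times> real) set" where "E n = (if n = 0 then {(x, y, g0 (x, y)) | x y. x \<in> {b..b} \<and> y \<in> {c..d}}
        else {(x, y, gk n (x, y)) | x y. x \<in> {seq_a a b (n - 1)..seq_a a b n} \<and> y \<in> {c..d}})" for n
    have hE: "hnull s (E n)" for n
    proof (cases "n = 0")
      case True
      have i0: "\<And>x. x \<in> {b..b} \<Longrightarrow> (\<lambda>_. seq_a a b 0) x \<in> {seq_a a b 0..seq_a a b 1}"
        using al by simp
      have m0: "\<And>x y. b \<le> x \<Longrightarrow> x \<le> y \<Longrightarrow> y \<le> b \<Longrightarrow> (\<lambda>_. seq_a a b 0) x \<le> (\<lambda>_. seq_a a b 0) y"
        by simp
      have c0: "continuous_on {b..b} (\<lambda>_. seq_a a b 0)" by (rule continuous_on_const)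
      note pk0 = piece_ok[OF cont bv al i0 m0 c0 order.refl zero_le_one]
      have p0: "continuous_on ({b..b} \<times> {c..d}) g0" "bvf g0 ({b..b} \<times> {c..d}) ((0 + 1) * K)"
        using pk0 by (simp_all add: g0_def)
      have hn: "hnull s {(x, y, g0 (x, y)) | x y. x \<in> {b..b} \<and> y \<in> {c..d}}"
        by (rule grid_null[OF order.refl _ p0(1) p0(2) s]) (use cd in simp)
      show ?thesis using hn True by (simp only: E_def if_True refl)
    next
      case False
      show ?thesis
      proof (cases "n = 1")
        case True
        have g1: "gk n = (\<lambda>(x, y). \<phi> x y)" using True by (simp add: gk_def Fn_def)
        have hn: "hnull s {(x, y, (\<lambda>(x, y). \<phi> x y) (x, y)) | x y. x \<in> {seq_a a b 0..seq_a a b 1} \<and> y \<in> {c..d}}"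
          by (rule grid_null[OF al _ cont bv s]) (use cd in simp)
        have "E n = {(x, y, (\<lambda>(x, y). \<phi> x y) (x, y)) | x y. x \<in> {seq_a a b 0..seq_a a b 1} \<and> y \<in> {c..d}}"
          using False True g1 by (simp only: E_def if_False diff_self_eq_0)
        then show ?thesis using hn by (simp only:)
      next
        case n1: False
        have n: "1 \<le> n" using False by simp
        define p where "p = seq_a a b (n - 1)"
        define q where "q = seq_a a b n"
        have pq: "p \<le> q" unfolding p_def q_def by (rule seq_a_mono[OF ab]) simp
        have psi: "psi a b n x = a + 2 ^ (n - 1) * (x - p)" for x
          unfolding p_def by (rule psi_eq[OF ab n])
        have psiq: "a + 2 ^ (n - 1) * (q - p) = seq_a a b 1"
          using psi_ends(2)[OF ab n] unfolding psi q_def[symmetric] .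
        have psi_in: "psi a b n x \<in> {seq_a a b 0..seq_a a b 1}" if "x \<in> {p..q}" for x
        proof -
          have h1: "2 ^ (n - 1) * (x - p) \<le> 2 ^ (n - 1) * (q - p)" using that by (intro mult_left_mono) auto
          have h0: "0 \<le> (2::real) ^ (n - 1) * (x - p)" using that by simp
          show ?thesis unfolding psi atLeastAtMost_iff seq_a_0 using h1 h0 psiq by linarith
        qed
        have psi_mono: "psi a b n x \<le> psi a b n y" if "p \<le> x" "x \<le> y" "y \<le> q" for x y
          using that by (simp add: psi mult_left_mono)
        have psi_cont: "continuous_on {p..q} (psi a b n)"
          unfolding psi[abs_def] by (intro continuous_intros)
        have eqg: "gk n = (\<lambda>(x, y). (1 / real n) * \<phi> (psi a b n x) y + ((real n - 1) / real n) * \<phi> (seq_a a b 0) y)"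
          using n1 by (simp add: gk_def Fn_def)
        have l2: "0 \<le> (real n - 1) / real n" using n by simp
        note pk = piece_ok[OF cont bv al psi_in psi_mono psi_cont _ l2, of "1 / real n"]
        have p1: "continuous_on ({p..q} \<times> {c..d}) (gk n)" and p2: "bvf (gk n) ({p..q} \<times> {c..d}) ((1 / real n + (real n - 1) / real n) * K)"
          unfolding eqg using pk by auto
        have hn: "hnull s {(x, y, gk n (x, y)) | x y. x \<in> {p..q} \<and> y \<in> {c..d}}"
          by (rule grid_null[OF pq _ p1 p2 s]) (use cd in simp)
        have "E n = {(x, y, gk n (x, y)) | x y. x \<in> {p..q} \<and> y \<in> {c..d}}"
          using False by (simp only: E_def if_False p_def q_def)
        then show ?thesis using hn by (simp only:)
      qed
    qed
    have GE: "G \<subseteq> (\<Union>n. E n)"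
    proof
      fix t assume "t \<in> G"
      then obtain x y where t: "t = (x, y, Tlim a b \<phi> x y)" and x: "x \<in> {a..b}" and y: "y \<in> {c..d}"
        unfolding G_def graph_T_def by blast
      show "t \<in> (\<Union>n. E n)"
      proof (cases "x = b")
        case True
        have "Tlim a b \<phi> b y = \<phi> a y" by (rule Tlim_b[OF ab]) (use per y in blast)
        then have "t \<in> E 0" using True t y by (simp add: E_def g0_def)
        then show ?thesis by blast
      next
        case False
        then have "x < b" using x by simp
        then obtain k where k: "1 \<le> k" "seq_a a b (k - 1) \<le> x" "x \<le> seq_a a b k" "Tlim a b \<phi> x y = Fn a b \<phi> k x y"
          using Tlim_lt[OF ab, of x \<phi> y] x by auto
        then have "t \<in> E k" using t y by (auto simp: E_def gk_def)
        then show ?thesis by blast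
      qed
    qed
    have "hnull s G" by (rule hnull_subset[OF hnull_Union[OF hE] GE])
    then show ?thesis by (rule hnull_H)
  qed
  have low: "hausdorff_measure s G \<noteq> 0" if "0 < s" "s < 2" for s
  proof (rule lower_bound[OF ab cd that(1)])
    show "s \<le> 2" using that by simp
    fix x y assume "x \<in> {a..b}" "y \<in> {c..d}"
    then show "\<exists>z. (x, y, z) \<in> G" unfolding G_def graph_T_def by blast
  qed
  define S where "S = {s. s > 0 \<and> hausdorff_measure s G = 0}"
  have S3: "3 \<in> S" using up by (simp add: S_def)
  have S2: "\<And>s. s \<in> S \<Longrightarrow> 2 \<le> s" using low unfolding S_def by force
  have "2 \<le> Inf S" using S3 S2 by (intro cInf_greatest) auto
  moreover have "Inf S \<le> 2"
  proof (rule ccontr)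
    assume "\<not> Inf S \<le> 2"
    then have "(Inf S + 2) / 2 \<in> S" using up by (simp add: S_def)
    moreover have "bdd_below S" using S2 by (rule bdd_belowI)
    ultimately have "Inf S \<le> (Inf S + 2) / 2" by (intro cInf_lower)
    with \<open>\<not> Inf S \<le> 2\<close> show False by simp
  qed
  ultimately show ?thesis unfolding hausdorff_dim_def S_def[symmetric] G_def[symmetric] by simp
qed

end
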